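(* Let $\alpha\ge0$, $2+\alpha+\sqrt{\alpha^2+\frac72\alpha+3}\le p<2(2+\alpha)$ and $s\in[0,1]$. Then $$B\left(\frac{2+\alpha}{p},1-\frac{2+\alpha}{p}\right)H_{\alpha,p}(s)\le\int_0^1\psi_{\alpha,p}(t)K_{\alpha,p}(s,t)\,dt.$$
   Context: $B(x,y)=\int_0^1 u^{x-1}(1-u)^{y-1}du$ is the Beta function. $\psi_{\alpha,p}(t)=t^{\frac{2+\alpha}{p}-1}(1-t)^{-\frac{2+\alpha}{p}}$ for $0<t<1$. $\binom{\alpha}{k}$ is the generalized binomial coefficient $\frac{\alpha(\alpha-1)\cdots(\alpha-k+1)}{k!}$, $\binom{\alpha}{0}=1$. $H_{\alpha,p}(s)=\sum_{k=0}^\infty\binom{\alpha}{k}(-1)^k\frac{1}{p-2\alpha-2+2k}-\frac{1}{2(\alpha+1)}(1-s^4)^{\alpha+1}$ for $0\le s\le1$, and $K_{\alpha,p}(s,t)=\sum_{k=0}^\infty\binom{\alpha}{k}(-1)^k\frac{1}{p-2\alpha-2+2k}\max\{s^2,t^2\}^{p-2\alpha-2+2k}$ for $0\le s\le1$, $0<t<1$. *)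

theory Defs
  imports "HOL-Analysis.Analysis"
begin

definition psi_ap :: "real \<Rightarrow> real \<Rightarrow> real \<Rightarrow> real" where
  "psi_ap \<alpha> p t = t powr ((2 + \<alpha>) / p - 1) * (1 - t) powr (- ((2 + \<alpha>) / p))"

definition H_ap :: "real \<Rightarrow> real \<Rightarrow> real \<Rightarrow> real" where
  "H_ap \<alpha> p s = (\<Sum>k. (\<alpha> gchoose k) * (-1) ^ k * (1 / (p - 2*\<alpha> - 2 + 2 * real k)))
      - 1 / (2 * (\<alpha> + 1)) * (1 - s ^ 4) powr (\<alpha> + 1)"

definition K_ap :: "real \<Rightarrow> real \<Rightarrow> real \<Rightarrow> real \<Rightarrow> real" where
  "K_ap \<alpha> p s t = (\<Sum>k. (\<alpha> gchoose k) * (-1) ^ k * (1 / (p - 2*\<alpha> - 2 + 2 * real k))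
      * (max (s^2) (t^2)) powr (p - 2*\<alpha> - 2 + 2 * real k))"

end

theory Submission
  imports Defs
begin

lemma pow_int:
  fixes m e :: real
  assumes "0 \<le> m" "m \<le> 1" "e > 0"
  shows "((\<lambda>x. x powr (e-1)) has_integral (1 - m powr e)/e) {m<..<1}"
proof -
  have "((\<lambda>x. x powr (e-1)) has_integral ((\<lambda>x. x powr e / e) 1 - (\<lambda>x. x powr e / e) m)) {m..1}"
  proof (rule fundamental_theorem_of_calculus_interior)
    show "m \<le> 1" by fact
    show "continuous_on {m..1} (\<lambda>x. x powr e / e)"
      using assms by (intro continuous_intros continuous_on_powr') auto
    fix x assume x: "x \<in> {m<..<1}"
    then have "x > 0" using assms by auto
    have "((\<lambda>x. x powr e / e) has_real_derivative (e * x powr (e-1)) / e) (at x)"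
      using assms by (intro derivative_eq_intros has_real_derivative_powr \<open>x>0\<close>) auto
    then show "((\<lambda>x. x powr e / e) has_vector_derivative x powr (e-1)) (at x)"
      using assms by (simp add: has_real_derivative_iff_has_vector_derivative)
  qed
  then show ?thesis using assms by (simp add: has_integral_Icc_iff_Ioo diff_divide_distrib)
qed

definition cc :: "real \<Rightarrow> nat \<Rightarrow> real" where
  "cc a k = (a gchoose k) * (-1)^k"

lemma cc_rec: "cc a (Suc k) = cc a k * ((real k - a) / (real k + 1))"
proof -
  have "a * (a gchoose k) = of_nat k * (a gchoose k) + of_nat (Suc k) * (a gchoose (Suc k))"
    by (rule gbinomial_mult_1)
  then have h: "(a gchoose (Suc k)) = (a gchoose k) * (a - k) / (k+1)"
    by (simp add: field_simps)
  show ?thesis unfolding cc_def h by (simp add: field_simps)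
qed

definition sg :: "real \<Rightarrow> real" where
  "sg a = (if cc a (nat \<lceil>a\<rceil>) \<ge> 0 then 1 else -1)"

lemma sg_abs: "\<bar>sg a\<bar> = 1" by (simp add: sg_def)

lemma cc_sign:
  assumes "a \<ge> 0" "k \<ge> nat \<lceil>a\<rceil>"
  shows "sg a * cc a k \<ge> 0"
  using assms(2)
proof (induction k rule: dec_induct)
  case base then show ?case by (simp add: sg_def)
next
  case (step k)
  have "real k \<ge> a" using step(1) assms(1)
  proof -
    have "a \<le> of_int \<lceil>a\<rceil>" by (rule le_of_int_ceiling)
    also have "\<dots> = real (nat \<lceil>a\<rceil>)" using assms(1) by simp
    also have "\<dots> \<le> real k" using step(1) by simp
    finally show ?thesis .
  qed
  then have "(real k - a) / (real k + 1) \<ge> 0" by simp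
  then have "0 \<le> (sg a * cc a k) * ((real k - a) / (real k + 1))"
    using step(3) by (rule mult_nonneg_nonneg[rotated])
  then show ?case by (simp add: cc_rec mult.assoc)
qed

lemma cc_abs:
  assumes "a \<ge> 0" "k \<ge> nat \<lceil>a\<rceil>"
  shows "\<bar>cc a k\<bar> = sg a * cc a k"
  using cc_sign[OF assms] by (auto simp: sg_def abs_if split: if_splits)

lemma cc_series:
  fixes y :: real assumes "0 \<le> y" "y < 1"
  shows "(\<lambda>k. cc a k * y^k) sums (1-y) powr a"
proof -
  have "(\<lambda>k. (a gchoose k) * (-y)^k) sums (1 + (-y)) powr a"
    using assms by (intro gen_binomial_real) auto
  moreover have "(a gchoose k) * (-y)^k = cc a k * y^k" for k
    unfolding cc_def power_minus[of y k] by (simp only: mult_ac)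
  ultimately show ?thesis by simp
qed

definition MM :: "real \<Rightarrow> real" where
  "MM a = 1 + 2 * (\<Sum>k<nat \<lceil>a\<rceil>. \<bar>cc a k\<bar>)"

lemma abs_series:
  fixes y :: real assumes a: "a \<ge> 0" and y: "0 \<le> y" "y < 1"
  shows "summable (\<lambda>k. \<bar>cc a k\<bar> * y^k) \<and> (\<Sum>k. \<bar>cc a k\<bar> * y^k) \<le> MM a"
proof -
  define N where "N = nat \<lceil>a\<rceil>"
  define d where "d k = (\<bar>cc a k\<bar> - sg a * cc a k) * y^k" for k
  have d0: "d k = 0" if "k \<notin> {..<N}" for k
  proof -
    have "nat \<lceil>a\<rceil> \<le> k" using that unfolding N_def by (simp only: lessThan_iff not_less)
    then show ?thesis unfolding d_def using cc_abs[OF a] by simp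
  qed
  have s1: "d sums (\<Sum>k\<in>{..<N}. d k)" by (rule sums_finite) (use d0 in auto)
  have s2: "(\<lambda>k. sg a * (cc a k * y^k)) sums (sg a * (1-y) powr a)"
    by (intro sums_mult cc_series y)
  have s3: "(\<lambda>k. sg a * (cc a k * y^k) + d k) sums (sg a * (1-y) powr a + (\<Sum>k\<in>{..<N}. d k))"
    by (intro sums_add s1 s2)
  have eq: "sg a * (cc a k * y^k) + d k = \<bar>cc a k\<bar> * y^k" for k
    unfolding d_def by (simp add: algebra_simps)
  have s4: "(\<lambda>k. \<bar>cc a k\<bar> * y^k) sums (sg a * (1-y) powr a + (\<Sum>k\<in>{..<N}. d k))"
    using s3 unfolding eq .
  have b1: "sg a * (1-y) powr a \<le> 1"
  proof -
    have "sg a * (1-y) powr a \<le> \<bar>sg a * (1-y) powr a\<bar>" by simp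
    also have "\<dots> = (1-y) powr a" using sg_abs[of a] by (simp add: abs_mult)
    also have "\<dots> \<le> 1" using a y by (intro powr_le1) auto
    finally show ?thesis .
  qed
  have b2: "d k \<le> 2 * \<bar>cc a k\<bar>" for k
  proof -
    have "\<bar>sg a * cc a k\<bar> = \<bar>cc a k\<bar>" using sg_abs[of a] by (simp add: abs_mult)
    then have "\<bar>cc a k\<bar> - sg a * cc a k \<le> 2 * \<bar>cc a k\<bar>" by linarith
    moreover have "\<bar>cc a k\<bar> - sg a * cc a k \<ge> 0" using \<open>\<bar>sg a * cc a k\<bar> = \<bar>cc a k\<bar>\<close> by linarith
    moreover have "y^k \<le> 1" "y^k \<ge> 0" using y by (auto intro: power_le_one)
    ultimately have "(\<bar>cc a k\<bar> - sg a * cc a k) * y^k \<le> (2 * \<bar>cc a k\<bar>) * 1"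
      by (intro mult_mono) auto
    then show ?thesis unfolding d_def by simp
  qed
  have "(\<Sum>k\<in>{..<N}. d k) \<le> (\<Sum>k\<in>{..<N}. 2 * \<bar>cc a k\<bar>)" by (intro sum_mono b2)
  then have "sg a * (1-y) powr a + (\<Sum>k\<in>{..<N}. d k) \<le> MM a"
    using b1 unfolding MM_def N_def sum_distrib_left[symmetric] by linarith
  moreover have "summable (\<lambda>k. \<bar>cc a k\<bar> * y^k)" using s4 by (rule sums_summable)
  moreover have "(\<Sum>k. \<bar>cc a k\<bar> * y^k) = sg a * (1-y) powr a + (\<Sum>k\<in>{..<N}. d k)"
    using s4 by (rule sums_unique[symmetric])
  ultimately show ?thesis by simp
qed

lemma powr_term_le:
  fixes x q :: real assumes "0 < x" "x < 1" "q \<ge> 1"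
  shows "x powr (q + 2 * real k - 1) \<le> (x^2)^k"
proof -
  have "x powr (q + 2 * real k - 1) = x powr (q - 1) * x powr (real (2*k))"
    by (simp add: powr_add[symmetric] algebra_simps)
  also have "\<dots> = x powr (q - 1) * (x^2)^k"
  proof -
    have "x powr (real (2*k)) = x^(2*k)" using assms by (intro powr_realpow) auto
    then show ?thesis by (simp add: power_mult)
  qed
  also have "\<dots> \<le> 1 * (x^2)^k"
    using assms by (intro mult_right_mono powr_le1) auto
  finally show ?thesis by simp
qed

lemma abs_summable1:
  fixes q a :: real assumes a: "a \<ge> 0" and q: "q \<ge> 1"
  shows "summable (\<lambda>k. \<bar>cc a k\<bar> / (q + 2 * real k))"
proof (rule summableI_nonneg_bounded)
  fix k show "0 \<le> \<bar>cc a k\<bar> / (q + 2 * real k)" using q by simp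
next
  fix n
  have i1: "((\<lambda>x. \<Sum>k<n. \<bar>cc a k\<bar> * x powr (q + 2 * real k - 1)) has_integral
      (\<Sum>k<n. \<bar>cc a k\<bar> * ((1 - 0 powr (q + 2 * real k)) / (q + 2 * real k)))) {0<..<1}"
    using q by (intro has_integral_sum has_integral_mult_right pow_int) auto
  have i2: "((\<lambda>x::real. MM a) has_integral MM a) {0<..<1}"
    using has_integral_const_real[of "MM a" 0 1] by (simp add: has_integral_Icc_iff_Ioo)
  have le: "(\<Sum>k<n. \<bar>cc a k\<bar> * x powr (q + 2 * real k - 1)) \<le> MM a" if x: "x \<in> {0<..<1}" for x
  proof -
    have "(\<Sum>k<n. \<bar>cc a k\<bar> * x powr (q + 2 * real k - 1)) \<le> (\<Sum>k<n. \<bar>cc a k\<bar> * (x^2)^k)"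
      using x q by (intro sum_mono mult_left_mono powr_term_le) auto
    also have "\<dots> \<le> (\<Sum>k. \<bar>cc a k\<bar> * (x^2)^k)"
      using abs_series[OF a, of "x^2"] x by (intro sum_le_suminf) (auto simp: power_less_one_iff abs_square_less_1)
    also have "\<dots> \<le> MM a"
      using abs_series[OF a, of "x^2"] x by (auto simp: abs_square_less_1)
    finally show ?thesis .
  qed
  have "(\<Sum>k<n. \<bar>cc a k\<bar> * ((1 - 0 powr (q + 2 * real k)) / (q + 2 * real k))) \<le> MM a"
    using has_integral_le[OF i1 i2 le] by simp
  moreover have "(\<Sum>k<n. \<bar>cc a k\<bar> * ((1 - 0 powr (q + 2 * real k)) / (q + 2 * real k))) = (\<Sum>k<n. \<bar>cc a k\<bar> / (q + 2 * real k))"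
    by simp
  ultimately show "(\<Sum>k<n. \<bar>cc a k\<bar> / (q + 2 * real k)) \<le> MM a" by simp
qed

lemma bridge:
  fixes f :: "real \<Rightarrow> real"
  assumes meas: "f \<in> borel_measurable borel" and S: "S \<in> sets borel"
    and nn: "\<And>x. x \<in> S \<Longrightarrow> 0 \<le> f x" and I: "(f has_integral I) S"
  shows "set_integrable lborel S f \<and> (LINT x:S|lborel. f x) = I"
proof -
  have N: "(\<integral>\<^sup>+x. indicator S x * f x \<partial>lborel) = ennreal I"
    using nn_integral_has_integral_lebesgue[OF nn I] by simp
  have "0 \<le> I" using has_integral_nonneg[OF I nn] by simp
  have m: "(\<lambda>x. indicator S x * f x) \<in> borel_measurable lborel"
    using meas S by measurable
  have "integrable lborel (\<lambda>x. indicator S x * f x) \<and> integral\<^sup>L lborel (\<lambda>x. indicator S x * f x) = I"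
    using nn_integral_eq_integrable[OF m _ \<open>0 \<le> I\<close>] N nn
    by (auto simp: indicator_def)
  then show ?thesis unfolding set_integrable_def set_lebesgue_integral_def by simp
qed

lemma term_int:
  fixes m e :: real
  assumes "0 \<le> m" "m \<le> 1" "e > 0"
  shows "set_integrable lborel {m<..<1} (\<lambda>x. x powr (e-1)) \<and>
         (LINT x:{m<..<1}|lborel. x powr (e-1)) = (1 - m powr e)/e"
  by (rule bridge) (use pow_int[OF assms] in auto)

lemma powr_term_eq:
  fixes x q :: real assumes "0 < x"
  shows "x powr (q + 2 * real k - 1) = x powr (q - 1) * (x^2)^k"
proof -
  have "x powr (q + 2 * real k - 1) = x powr (q - 1) * x powr (real (2*k))"
    by (simp add: powr_add[symmetric] algebra_simps)
  also have "x powr (real (2*k)) = x^(2*k)" using assms by (intro powr_realpow) auto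
  finally show ?thesis by (simp add: power_mult)
qed

lemma series_int:
  fixes a q m :: real
  assumes a: "a \<ge> 0" and q: "q \<ge> 1" and m: "0 \<le> m" "m \<le> 1"
  shows "(\<lambda>k. cc a k * (1 / (q + 2 * real k)) - cc a k * (1 / (q + 2 * real k)) * m powr (q + 2 * real k))
     sums (LINT x:{m<..<1}|lborel. x powr (q-1) * (1 - x^2) powr a)"
proof -
  define g where "g k x = cc a k * (indicator {m<..<1} x * x powr (q + 2 * real k - 1))" for k x
  have T: "set_integrable lborel {m<..<1} (\<lambda>x. x powr (q + 2 * real k - 1)) \<and>
         (LINT x:{m<..<1}|lborel. x powr (q + 2 * real k - 1)) = (1 - m powr (q + 2 * real k))/(q + 2 * real k)" for k
    using term_int[OF m, of "q + 2 * real k"] q by simp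
  have int: "integrable lborel (g k)" for k
    unfolding g_def using T[of k] unfolding set_integrable_def by (intro integrable_mult_right) simp
  have intv: "integral\<^sup>L lborel (g k) = cc a k * (1 / (q + 2 * real k)) - cc a k * (1 / (q + 2 * real k)) * m powr (q + 2 * real k)" for k
  proof -
    have "integral\<^sup>L lborel (g k) = cc a k * (LINT x:{m<..<1}|lborel. x powr (q + 2 * real k - 1))"
      unfolding g_def set_lebesgue_integral_def by simp
    also have "\<dots> = cc a k * ((1 - m powr (q + 2 * real k))/(q + 2 * real k))" using T[of k] by simp
    finally show ?thesis by (simp add: algebra_simps diff_divide_distrib)
  qed
  have nint: "(\<integral>x. norm (g k x) \<partial>lborel) = \<bar>cc a k\<bar> * ((1 - m powr (q + 2 * real k))/(q + 2 * real k))" for k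
  proof -
    have "(\<lambda>x. norm (g k x)) = (\<lambda>x. \<bar>cc a k\<bar> * (indicator {m<..<1} x * x powr (q + 2 * real k - 1)))"
      unfolding g_def by (auto simp: abs_mult indicator_def)
    then have "(\<integral>x. norm (g k x) \<partial>lborel) = \<bar>cc a k\<bar> * (LINT x:{m<..<1}|lborel. x powr (q + 2 * real k - 1))"
      unfolding set_lebesgue_integral_def by simp
    then show ?thesis using T[of k] by simp
  qed
  have summ: "summable (\<lambda>k. \<integral>x. norm (g k x) \<partial>lborel)"
  proof (rule summable_comparison_test[OF _ abs_summable1[OF a q]])
    show "\<exists>N. \<forall>n\<ge>N. norm (\<integral>x. norm (g n x) \<partial>lborel) \<le> \<bar>cc a n\<bar> / (q + 2 * real n)"
    proof (intro exI allI impI)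
      fix n :: nat
      have e: "q + 2 * real n > 0" using q by simp
      have "m powr (q + 2 * real n) \<le> 1" using m e by (intro powr_le1) auto
      moreover have "m powr (q + 2 * real n) \<ge> 0" by simp
      ultimately have "0 \<le> (1 - m powr (q + 2 * real n))/(q + 2 * real n)" "(1 - m powr (q + 2 * real n))/(q + 2 * real n) \<le> 1/(q + 2 * real n)"
        using e by (auto simp: divide_right_mono)
      then show "norm (\<integral>x. norm (g n x) \<partial>lborel) \<le> \<bar>cc a n\<bar> / (q + 2 * real n)"
      proof -
        have "\<bar>cc a n\<bar> * ((1 - m powr (q + 2 * real n))/(q + 2 * real n)) \<le> \<bar>cc a n\<bar> * (1/(q + 2 * real n))"
          by (rule mult_left_mono) (use \<open>(1 - m powr (q + 2 * real n))/(q + 2 * real n) \<le> 1/(q + 2 * real n)\<close> in auto)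
        moreover have "0 \<le> \<bar>cc a n\<bar> * ((1 - m powr (q + 2 * real n))/(q + 2 * real n))"
          by (rule mult_nonneg_nonneg) (use \<open>0 \<le> (1 - m powr (q + 2 * real n))/(q + 2 * real n)\<close> in auto)
        ultimately show ?thesis using nint[of n] by (simp del: real_norm_def) (simp only: real_norm_def abs_of_nonneg)
      qed
    qed
  qed
  have ptw: "summable (\<lambda>k. norm (g k x)) \<and> (\<Sum>k. g k x) = indicator {m<..<1} x * (x powr (q-1) * (1 - x^2) powr a)" for x
  proof (cases "x \<in> {m<..<1}")
    case True
    then have x: "0 < x" "x < 1" using m by auto
    have y: "0 \<le> x^2" "x^2 < 1" using x by (auto simp: abs_square_less_1)
    have geq: "g k x = x powr (q-1) * (cc a k * (x^2)^k)" for k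
      unfolding g_def using True powr_term_eq[OF x(1), of q k] by simp
    have "summable (\<lambda>k. \<bar>cc a k\<bar> * (x^2)^k)" using abs_series[OF a y] by simp
    then have "summable (\<lambda>k. x powr (q-1) * (\<bar>cc a k\<bar> * (x^2)^k))" by (rule summable_mult)
    moreover have "norm (g k x) = x powr (q-1) * (\<bar>cc a k\<bar> * (x^2)^k)" for k
      unfolding geq using y by (simp add: abs_mult)
    ultimately have s1: "summable (\<lambda>k. norm (g k x))" by simp
    have "(\<lambda>k. x powr (q-1) * (cc a k * (x^2)^k)) sums (x powr (q-1) * (1 - x^2) powr a)"
      by (intro sums_mult cc_series[OF y])
    then have "(\<Sum>k. g k x) = x powr (q-1) * (1 - x^2) powr a" unfolding geq by (rule sums_unique[symmetric])
    then show ?thesis using s1 True by simp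
  next
    case False
    then show ?thesis unfolding g_def by simp
  qed
  have "(\<lambda>k. integral\<^sup>L lborel (g k)) sums (\<integral>x. (\<Sum>k. g k x) \<partial>lborel)"
    by (rule sums_integral[OF int _ summ]) (use ptw in auto)
  moreover have "(\<integral>x. (\<Sum>k. g k x) \<partial>lborel) = (LINT x:{m<..<1}|lborel. x powr (q-1) * (1 - x^2) powr a)"
    unfolding set_lebesgue_integral_def using ptw by simp
  ultimately show ?thesis unfolding intv by simp
qed

definition psib :: "real \<Rightarrow> real \<Rightarrow> real" where
  "psib b t = t powr (b - 1) * (1 - t) powr (- b)"

lemma psib_nonneg: "psib b t \<ge> 0" by (simp add: psib_def)

lemma psib_meas[measurable]: "psib b \<in> borel_measurable borel"
  unfolding psib_def by measurable

lemma beta_hasint: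
  assumes "0 < b" "b < 1"
  shows "(psib b has_integral Beta b (1-b)) {0<..<1}"
proof -
  have "((\<lambda>t. t powr (b - 1) * (1 - t) powr ((1-b) - 1)) has_integral Beta b (1-b)) {0..1}"
    using assms by (intro has_integral_Beta_real) auto
  then show ?thesis unfolding psib_def by (simp add: has_integral_Icc_iff_Ioo)
qed

lemma beta_lint:
  assumes "0 < b" "b < 1"
  shows "set_integrable lborel {0<..<1} (psib b) \<and> (LINT t:{0<..<1}|lborel. psib b t) = Beta b (1-b)"
  by (rule bridge) (use beta_hasint[OF assms] psib_nonneg in auto)

lemma beta_nn:
  assumes "0 < b" "b < 1"
  shows "(\<integral>\<^sup>+t. ennreal (indicator {0<..<1} t * psib b t) \<partial>lborel) = ennreal (Beta b (1-b))"
  using nn_integral_has_integral_lebesgue[OF _ beta_hasint[OF assms]] psib_nonneg by simp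

lemma psib_scale:
  assumes b: "0 < b" "b < 1" and r: "0 < r" "r \<le> 1" and x: "0 < x" "x < 1"
  shows "r * psib b (r * x) \<le> r powr b * psib b x"
proof -
  have "r * psib b (r * x) = r powr b * (x powr (b - 1) * (1 - r * x) powr (- b))"
    unfolding psib_def using r x
    by (simp add: powr_mult powr_diff powr_minus field_simps)
  also have "\<dots> \<le> r powr b * (x powr (b - 1) * (1 - x) powr (- b))"
  proof -
    have "r * x \<le> x" using r x by (simp add: mult_le_cancel_right1)
    then have "(1 - r * x) powr (- b) \<le> (1 - x) powr (- b)"
      using b x by (intro powr_mono2') auto
    then show ?thesis by (intro mult_left_mono) auto
  qed
  finally show ?thesis unfolding psib_def .
qed

lemma scale_bound:
  assumes b: "0 < b" "b < 1" and r: "0 < r" "r \<le> 1"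
  shows "(\<integral>\<^sup>+t. ennreal (indicator {0<..<r} t * psib b t) \<partial>lborel) \<le> ennreal (r powr b * Beta b (1-b))"
proof -
  have "(\<integral>\<^sup>+t. ennreal (indicator {0<..<r} t * psib b t) \<partial>lborel)
      = ennreal \<bar>r\<bar> * (\<integral>\<^sup>+x. ennreal (indicator {0<..<r} (0 + r * x) * psib b (0 + r * x)) \<partial>lborel)"
    using r by (intro nn_integral_real_affine) auto
  also have "\<dots> = (\<integral>\<^sup>+x. ennreal r * ennreal (indicator {0<..<r} (0 + r * x) * psib b (0 + r * x)) \<partial>lborel)"
    using r by (subst nn_integral_cmult) auto
  also have "\<dots> \<le> (\<integral>\<^sup>+x. ennreal (r powr b) * ennreal (indicator {0<..<1} x * psib b x) \<partial>lborel)"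
  proof (intro nn_integral_mono)
    fix x
    show "ennreal r * ennreal (indicator {0<..<r} (0 + r * x) * psib b (0 + r * x))
        \<le> ennreal (r powr b) * ennreal (indicator {0<..<1} x * psib b x)"
    proof (cases "0 < x \<and> x < 1")
      case True
      then have "r * x \<in> {0<..<r}" using r by auto
      then show ?thesis using True psib_scale[OF b r, of x] r psib_nonneg[of b]
        by (simp add: ennreal_mult[symmetric])
    next
      case False
      then have "r * x \<notin> {0<..<r}" using r by (auto simp: mult_less_cancel_left1 zero_less_mult_iff)
      then show ?thesis by simp
    qed
  qed
  also have "\<dots> = ennreal (r powr b) * ennreal (Beta b (1-b))"
    by (subst nn_integral_cmult) (auto simp: beta_nn[OF b])
  also have "\<dots> = ennreal (r powr b * Beta b (1-b))"
    using has_integral_nonneg[OF beta_hasint[OF b] psib_nonneg] by (simp add: ennreal_mult)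
  finally show ?thesis .
qed

lemma G_nn:
  fixes a s :: real assumes a: "a \<ge> 0" and s: "0 \<le> s" "s \<le> 1"
  shows "(\<integral>\<^sup>+x. ennreal (indicator {s^2<..<1} x * (x * (1 - x^2) powr a)) \<partial>lborel)
     = ennreal ((1 - s^4) powr (a + 1) / (2 * (a + 1)))"
proof -
  define u where "u = s^2"
  have u: "0 \<le> u" "u \<le> 1" using s unfolding u_def by (auto simp: power_le_one)
  define F where "F x = - ((1 - x^2) powr (a + 1) / (2 * (a + 1)))" for x :: real
  have "((\<lambda>x. x * (1 - x^2) powr a) has_integral (F 1 - F u)) {u..1}"
  proof (rule fundamental_theorem_of_calculus_interior)
    show "u \<le> 1" by fact
    have c: "continuous_on {u..1} (\<lambda>x::real. (1 - x^2) powr (a + 1))"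
      using a u by (intro continuous_on_powr' continuous_intros) (auto simp: abs_square_le_1)
    show "continuous_on {u..1} F" unfolding F_def
      by (rule continuous_on_minus[OF continuous_on_divide[OF c continuous_on_const]]) (use a in auto)
    fix x assume x: "x \<in> {u<..<1}"
    then have "1 - x^2 > 0" using u by (auto simp: abs_square_less_1)
    have "(F has_real_derivative - ((a + 1) * (1 - x^2) powr (a + 1 - 1) * (0 - 2 * x ^ 1 * 1) / (2 * (a + 1)))) (at x)"
      unfolding F_def using \<open>1 - x^2 > 0\<close> a
      by (intro derivative_eq_intros DERIV_powr has_real_derivative_powr) auto
    moreover have "- ((a + 1) * (1 - x^2) powr (a + 1 - 1) * (0 - 2 * x ^ 1 * 1) / (2 * (a + 1))) = x * (1 - x^2) powr a"
      using a by (simp add: field_simps)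
    ultimately show "(F has_vector_derivative x * (1 - x^2) powr a) (at x)"
      by (simp add: has_real_derivative_iff_has_vector_derivative)
  qed
  moreover have "F 1 - F u = (1 - s^4) powr (a + 1) / (2 * (a + 1))"
  proof -
    have "u^2 = s^4" unfolding u_def by (simp add: power_mult[symmetric])
    then show ?thesis unfolding F_def by simp
  qed
  ultimately have "((\<lambda>x. x * (1 - x^2) powr a) has_integral ((1 - s^4) powr (a + 1) / (2 * (a + 1)))) {u<..<1}"
    by (simp add: has_integral_Icc_iff_Ioo)
  from nn_integral_has_integral_lebesgue[OF _ this] u show ?thesis unfolding u_def by simp
qed

definition f0 :: "real \<Rightarrow> real \<Rightarrow> real \<Rightarrow> real" where
  "f0 a q x = x powr (q-1) * (1 - x^2) powr a"

lemma f0_meas[measurable]: "f0 a q \<in> borel_measurable borel"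
  unfolding f0_def by measurable

lemma f0_nonneg: "f0 a q x \<ge> 0" by (simp add: f0_def)

lemma f0_le1: assumes "0 < x" "x < 1" "q \<ge> 1" "a \<ge> 0" shows "f0 a q x \<le> 1"
proof -
  have "x powr (q-1) \<le> 1" "(1 - x^2) powr a \<le> 1" "(1 - x^2) powr a \<ge> 0"
    using assms by (auto intro!: powr_le1 simp: abs_square_le_1)
  then show ?thesis unfolding f0_def by (metis mult_le_one powr_ge_zero)
qed

lemma f0_int:
  assumes "0 \<le> m" "q \<ge> 1" "a \<ge> 0"
  shows "set_integrable lborel {m<..<1} (f0 a q)"
  unfolding set_integrable_def
proof (rule Bochner_Integration.integrable_bound[where f="indicator {0<..<1} :: real \<Rightarrow> real"])
  show "integrable lborel (indicator {0<..<1} :: real \<Rightarrow> real)" by simp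
  show "(\<lambda>x. indicator {m<..<1} x *\<^sub>R f0 a q x) \<in> borel_measurable lborel" by measurable
  show "AE x in lborel. norm (indicator {m<..<1} x *\<^sub>R f0 a q x) \<le> norm (indicator {0<..<1} x :: real)"
    using assms f0_le1[of _ q a] f0_nonneg[of a q] by (auto simp: indicator_def)
qed

lemma fub:
  fixes a q b s :: real
  assumes a: "a \<ge> 0" and q: "q \<ge> 1" and b: "0 < b" "b < 1" and qb: "q - 1 + b/2 \<ge> 1"
    and s: "0 \<le> s" "s \<le> 1"
  shows "(\<integral>\<^sup>+t. ennreal (indicator {0<..<1} t * psib b t * (LINT x:{max (s^2) (t^2)<..<1}|lborel. f0 a q x)) \<partial>lborel)
     \<le> ennreal (Beta b (1-b) * ((1 - s^4) powr (a+1) / (2*(a+1))))"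
proof -
  define u where "u = s^2"
  have u: "0 \<le> u" "u \<le> 1" using s unfolding u_def by (auto simp: power_le_one)
  define H where "H t x = (if 0 < t \<and> t < 1 \<and> max u (t^2) < x \<and> x < 1 then psib b t * f0 a q x else 0)" for t x :: real
  have Hnn: "H t x \<ge> 0" for t x unfolding H_def using psib_nonneg f0_nonneg by simp
  have Bnn: "Beta b (1-b) \<ge> 0" using has_integral_nonneg[OF beta_hasint[OF b] psib_nonneg] .
  have step1: "ennreal (indicator {0<..<1} t * psib b t * (LINT x:{max u (t^2)<..<1}|lborel. f0 a q x))
      = (\<integral>\<^sup>+x. ennreal (H t x) \<partial>lborel)" for t
  proof (cases "0 < t \<and> t < 1")
    case True
    define m where "m = max u (t^2)"
    have m0: "0 \<le> m" using u unfolding m_def by auto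
    have I: "set_integrable lborel {m<..<1} (f0 a q)" by (rule f0_int[OF m0 q a])
    have "(\<integral>\<^sup>+x. ennreal (indicator {m<..<1} x * f0 a q x) \<partial>lborel) = ennreal (LINT x:{m<..<1}|lborel. f0 a q x)"
      using nn_integral_eq_integral[OF I[unfolded set_integrable_def]] f0_nonneg
      unfolding set_lebesgue_integral_def by simp
    moreover have Lnn: "0 \<le> (LINT x:{m<..<1}|lborel. f0 a q x)"
      unfolding set_lebesgue_integral_def by (rule Bochner_Integration.integral_nonneg) (simp add: f0_nonneg)
    ultimately have "ennreal (indicator {0<..<1} t * psib b t * (LINT x:{m<..<1}|lborel. f0 a q x))
        = ennreal (psib b t) * (\<integral>\<^sup>+x. ennreal (indicator {m<..<1} x * f0 a q x) \<partial>lborel)"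
      using True psib_nonneg[of b t] Lnn
      by (simp add: ennreal_mult)
    also have "\<dots> = (\<integral>\<^sup>+x. ennreal (psib b t) * ennreal (indicator {m<..<1} x * f0 a q x) \<partial>lborel)"
      by (subst nn_integral_cmult) auto
    also have "\<dots> = (\<integral>\<^sup>+x. ennreal (H t x) \<partial>lborel)"
      by (intro nn_integral_cong) (use True psib_nonneg f0_nonneg in \<open>auto simp: H_def m_def indicator_def ennreal_mult\<close>)
    finally show ?thesis unfolding m_def .
  next
    case False
    then have "H t x = 0" for x unfolding H_def by auto
    then show ?thesis using False by simp
  qed
  have meas: "(\<lambda>(x, t). ennreal (H t x)) \<in> borel_measurable (lborel \<Otimes>\<^sub>M lborel)"
    unfolding H_def by measurable
  have step2: "(\<integral>\<^sup>+t. (\<integral>\<^sup>+x. ennreal (H t x) \<partial>lborel) \<partial>lborel) = (\<integral>\<^sup>+x. (\<integral>\<^sup>+t. ennreal (H t x) \<partial>lborel) \<partial>lborel)"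
    using lborel_pair.Fubini'[of "\<lambda>x t. ennreal (H t x)"] meas by simp
  have step3: "(\<integral>\<^sup>+t. ennreal (H t x) \<partial>lborel) \<le> ennreal (Beta b (1-b)) * ennreal (indicator {u<..<1} x * (x * (1 - x^2) powr a))" for x
  proof (cases "u < x \<and> x < 1")
    case True
    then have x: "0 < x" "x < 1" using u by auto
    have sx: "0 < sqrt x" "sqrt x \<le> 1" using x by auto
    have "H t x = f0 a q x * (indicator {0<..<sqrt x} t * psib b t)" for t
    proof (cases "0 < t")
      case True
      have "(t^2 < x) = (t < sqrt x)" using True x by (metis abs_of_pos real_less_rsqrt real_sqrt_abs real_sqrt_less_iff)
      moreover have "t < sqrt x \<Longrightarrow> t < 1" using sx by linarith
      ultimately show ?thesis using True \<open>u < x \<and> x < 1\<close> unfolding H_def by (auto simp: indicator_def)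
    next
      case False
      then show ?thesis unfolding H_def by (auto simp: indicator_def)
    qed
    then have "(\<integral>\<^sup>+t. ennreal (H t x) \<partial>lborel) = (\<integral>\<^sup>+t. ennreal (f0 a q x) * ennreal (indicator {0<..<sqrt x} t * psib b t) \<partial>lborel)"
      using f0_nonneg psib_nonneg by (intro nn_integral_cong) (simp add: ennreal_mult)
    also have "\<dots> = ennreal (f0 a q x) * (\<integral>\<^sup>+t. ennreal (indicator {0<..<sqrt x} t * psib b t) \<partial>lborel)"
      by (subst nn_integral_cmult) auto
    also have "\<dots> \<le> ennreal (f0 a q x) * ennreal (sqrt x powr b * Beta b (1-b))"
      by (intro mult_left_mono scale_bound b sx) auto
    also have "\<dots> = ennreal (Beta b (1-b) * (f0 a q x * sqrt x powr b))"
      using f0_nonneg Bnn by (simp add: ennreal_mult[symmetric] mult_ac)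
    also have "\<dots> \<le> ennreal (Beta b (1-b) * (x * (1 - x^2) powr a))"
    proof -
      have "sqrt x powr b = x powr (b/2)" using x by (simp add: powr_half_sqrt[symmetric] powr_powr)
      then have "f0 a q x * sqrt x powr b = x powr (q - 1 + b/2) * (1 - x^2) powr a"
        unfolding f0_def by (simp add: powr_add)
      also have "\<dots> \<le> x * (1 - x^2) powr a"
        using x qb by (intro mult_right_mono powr_le_one_le) auto
      finally show ?thesis using Bnn by (intro ennreal_leI mult_left_mono)
    qed
    moreover have "ennreal (Beta b (1-b) * (x * (1 - x^2) powr a)) = ennreal (Beta b (1-b)) * ennreal (x * (1 - x^2) powr a)"
      by (rule ennreal_mult) (use Bnn x in auto)
    ultimately show ?thesis using True by simp
  next
    case False
    then have "H t x = 0" for t unfolding H_def by auto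
    then show ?thesis by simp
  qed
  have "(\<integral>\<^sup>+t. ennreal (indicator {0<..<1} t * psib b t * (LINT x:{max (s^2) (t^2)<..<1}|lborel. f0 a q x)) \<partial>lborel)
      = (\<integral>\<^sup>+x. (\<integral>\<^sup>+t. ennreal (H t x) \<partial>lborel) \<partial>lborel)"
    unfolding u_def[symmetric] step1 step2 ..
  also have "\<dots> \<le> (\<integral>\<^sup>+x. ennreal (Beta b (1-b)) * ennreal (indicator {u<..<1} x * (x * (1 - x^2) powr a)) \<partial>lborel)"
    by (intro nn_integral_mono step3)
  also have "\<dots> = ennreal (Beta b (1-b)) * ennreal ((1 - s^4) powr (a + 1) / (2 * (a + 1)))"
    by (subst nn_integral_cmult) (auto simp: u_def G_nn[OF a s])
  also have "\<dots> = ennreal (Beta b (1-b) * ((1 - s^4) powr (a+1) / (2*(a+1))))"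
    by (rule ennreal_mult[symmetric]) (use Bnn a in auto)
  finally show ?thesis .
qed

lemma param_facts:
  fixes \<alpha> p :: real
  assumes "\<alpha> \<ge> 0"
    and "2 + \<alpha> + sqrt (\<alpha>^2 + 7/2 * \<alpha> + 3) \<le> p"
  shows "p > 0" "0 < (2 + \<alpha>) / p" "(2 + \<alpha>) / p < 1" "p - 2*\<alpha> - 2 \<ge> 1"
    "(p - 2*\<alpha> - 2) - 1 + ((2 + \<alpha>) / p) / 2 \<ge> 1"
proof -
  define r where "r = sqrt (\<alpha>^2 + 7/2 * \<alpha> + 3)"
  have "0 \<le> \<alpha>^2" by simp
  then have h: "0 \<le> \<alpha>^2 + 7/2 * \<alpha> + 3" using assms(1) by linarith
  then have r2: "r^2 = \<alpha>^2 + 7/2 * \<alpha> + 3" unfolding r_def by (rule real_sqrt_pow2)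
  have r0: "r \<ge> 0" unfolding r_def by (rule real_sqrt_ge_zero[OF h])
  have "(\<alpha> + 1)^2 \<le> r^2" using r2 assms(1) by (simp add: power2_eq_square algebra_simps)
  then have r1: "\<alpha> + 1 \<le> r" using r0 assms(1) by (simp add: power2_le_iff_abs_le)
  have p: "2 + \<alpha> + r \<le> p" using assms(2) unfolding r_def .
  show "p > 0" using p r1 assms(1) by linarith
  then show "0 < (2 + \<alpha>) / p" using assms(1) by simp
  show "(2 + \<alpha>) / p < 1" using p r1 assms(1) \<open>p > 0\<close> by (simp add: divide_less_eq)
  show "p - 2*\<alpha> - 2 \<ge> 1" using p r1 by linarith
  have "0 \<le> 2 * (p - (\<alpha> + 2) - r) * (p - (\<alpha> + 2) + r)"
    using p r0 by (intro mult_nonneg_nonneg) auto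
  also have "\<dots> = 2 * p^2 - 2 * (2*\<alpha> + 4) * p + (2 + \<alpha>)"
    using r2 by (simp add: algebra_simps power2_eq_square)
  finally have Q: "0 \<le> 2 * p^2 - 2 * (2*\<alpha> + 4) * p + (2 + \<alpha>)" .
  have "(p - 2*\<alpha> - 2) - 1 + ((2 + \<alpha>) / p) / 2 - 1 = (2 * p^2 - 2 * (2*\<alpha> + 4) * p + (2 + \<alpha>)) / (2 * p)"
    using \<open>p > 0\<close> by (simp add: field_simps power2_eq_square)
  also have "\<dots> \<ge> 0" using Q \<open>p > 0\<close> by simp
  finally show "(p - 2*\<alpha> - 2) - 1 + ((2 + \<alpha>) / p) / 2 \<ge> 1" by simp
qed

theorem lemma3p3:
  fixes \<alpha> p s :: real
  assumes "\<alpha> \<ge> 0"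
    and "2 + \<alpha> + sqrt (\<alpha>^2 + 7/2 * \<alpha> + 3) \<le> p" and "p < 2 * (2 + \<alpha>)"
    and "s \<in> {0..1}"
  shows "Beta ((2 + \<alpha>) / p) (1 - (2 + \<alpha>) / p) * H_ap \<alpha> p s
    \<le> (LINT t:{0<..<1}|lborel. psi_ap \<alpha> p t * K_ap \<alpha> p s t)"
proof -
  define b where "b = (2 + \<alpha>) / p"
  define q where "q = p - 2*\<alpha> - 2"
  have a: "\<alpha> \<ge> 0" by fact
  have b: "0 < b" "b < 1" using param_facts[OF assms(1,2)] unfolding b_def by auto
  have q: "q \<ge> 1" using param_facts[OF assms(1,2)] unfolding q_def by auto
  have qb: "q - 1 + b/2 \<ge> 1" using param_facts[OF assms(1,2)] unfolding q_def b_def by auto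
  have s: "0 \<le> s" "s \<le> 1" using assms(4) by auto
  define T where "T k = cc \<alpha> k * (1 / (q + 2 * real k))" for k
  define S where "S = (\<Sum>k. T k)"
  define G where "G = (1 - s^4) powr (\<alpha>+1) / (2*(\<alpha>+1))"
  define B where "B = Beta b (1-b)"
  define K where "K t = K_ap \<alpha> p s t" for t
  have psi: "psi_ap \<alpha> p t = psib b t" for t unfolding psi_ap_def psib_def b_def by simp
  have Kdef: "K t = (\<Sum>k. T k * max (s^2) (t^2) powr (q + 2 * real k))" for t
    unfolding K_def K_ap_def T_def cc_def q_def by simp
  have Hdef: "H_ap \<alpha> p s = S - G"
    unfolding H_ap_def S_def T_def cc_def q_def G_def by simp
  have Ksum: "summable T"
  proof -
    have S1: "summable (\<lambda>k. \<bar>cc \<alpha> k\<bar> / (q + 2 * real k))" by (rule abs_summable1[OF a q])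
    have TE: "\<bar>T k\<bar> = \<bar>cc \<alpha> k\<bar> / (q + 2 * real k)" for k
    proof -
      have e: "0 < q + 2 * real k" using q by simp
      have "\<bar>T k\<bar> = \<bar>cc \<alpha> k\<bar> * \<bar>1 / (q + 2 * real k)\<bar>" unfolding T_def by (rule abs_mult)
      also have "\<bar>1 / (q + 2 * real k)\<bar> = 1 / (q + 2 * real k)" using e by simp
      finally show ?thesis by simp
    qed
    have "(\<lambda>k. \<bar>T k\<bar>) = (\<lambda>k. \<bar>cc \<alpha> k\<bar> / (q + 2 * real k))" using TE by (rule ext)
    then have "summable (\<lambda>k. \<bar>T k\<bar>)" using S1 by (simp only:)
    then show ?thesis by (rule summable_rabs_cancel)
  qed
  define D where "D t = (LINT x:{max (s^2) (t^2)<..<1}|lborel. f0 \<alpha> q x)" for t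
  have KD: "K t = S - D t" if t: "0 < t" "t < 1" for t
  proof -
    define m where "m = max (s^2) (t^2)"
    have m1: "0 \<le> s^2" "s^2 \<le> 1" "t^2 \<le> 1" using s t by (auto intro: power_le_one)
    have m: "0 \<le> m" "m \<le> 1" unfolding m_def using m1 by (auto simp: le_max_iff_disj)
    have "(\<lambda>k. T k - T k * m powr (q + 2 * real k)) sums D t"
      using series_int[OF a q m] unfolding D_def T_def m_def f0_def .
    moreover have "T sums S" using Ksum unfolding S_def by (simp add: summable_sums)
    ultimately have "(\<lambda>k. T k - (T k - T k * m powr (q + 2 * real k))) sums (S - D t)"
      by (intro sums_diff)
    then have "(\<lambda>k. T k * m powr (q + 2 * real k)) sums (S - D t)" by simp
    then show ?thesis unfolding Kdef m_def by (simp add: sums_iff)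
  qed
  define g where "g t = indicator {0<..<1} t * psib b t * (S - K t)" for t
  have g_eq: "g t = indicator {0<..<1} t * psib b t * D t" for t
    unfolding g_def using KD by (auto simp: indicator_def)
  have g_nn: "g t \<ge> 0" for t
  proof -
    have "D t \<ge> 0" unfolding D_def set_lebesgue_integral_def
      by (rule Bochner_Integration.integral_nonneg) (simp add: f0_nonneg)
    then show ?thesis unfolding g_eq using psib_nonneg by simp
  qed
  have Kmeas: "K \<in> borel_measurable lborel" unfolding K_def K_ap_def by measurable
  have g_meas: "g \<in> borel_measurable lborel" unfolding g_def using Kmeas by measurable
  have G_nn: "G \<ge> 0" unfolding G_def using a by simp
  have B_nn: "B \<ge> 0" unfolding B_def using has_integral_nonneg[OF beta_hasint[OF b] psib_nonneg] .
  have nnb: "(\<integral>\<^sup>+t. ennreal (g t) \<partial>lborel) \<le> ennreal (B * G)"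
    using fub[OF a q b qb s] unfolding g_eq D_def B_def G_def .
  have g_int: "integrable lborel g"
  proof (rule integrableI_bounded[OF g_meas])
    have "(\<integral>\<^sup>+t. ennreal (norm (g t)) \<partial>lborel) = (\<integral>\<^sup>+t. ennreal (g t) \<partial>lborel)"
      using g_nn by simp
    also have "\<dots> < \<infinity>" using nnb by (simp add: le_less_trans)
    finally show "(\<integral>\<^sup>+t. ennreal (norm (g t)) \<partial>lborel) < \<infinity>" .
  qed
  have "ennreal (integral\<^sup>L lborel g) = (\<integral>\<^sup>+t. ennreal (g t) \<partial>lborel)"
    using nn_integral_eq_integral[OF g_int] g_nn by simp
  then have "ennreal (integral\<^sup>L lborel g) \<le> ennreal (B * G)" using nnb by simp
  then have gI: "integral\<^sup>L lborel g \<le> B * G"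
    using B_nn G_nn by (subst (asm) ennreal_le_iff) auto
  have psi_int: "integrable lborel (\<lambda>t. indicator {0<..<1} t * psib b t)"
    and psi_val: "integral\<^sup>L lborel (\<lambda>t. indicator {0<..<1} t * psib b t) = B"
    using beta_lint[OF b] unfolding B_def set_integrable_def set_lebesgue_integral_def by auto
  have "(LINT t:{0<..<1}|lborel. psi_ap \<alpha> p t * K_ap \<alpha> p s t)
      = integral\<^sup>L lborel (\<lambda>t. S * (indicator {0<..<1} t * psib b t) - g t)"
    unfolding set_lebesgue_integral_def psi g_def K_def[symmetric]
    by (intro Bochner_Integration.integral_cong) (auto simp: algebra_simps)
  also have "\<dots> = S * B - integral\<^sup>L lborel g"
    using psi_int g_int psi_val by simp
  finally have R: "(LINT t:{0<..<1}|lborel. psi_ap \<alpha> p t * K_ap \<alpha> p s t) = S * B - integral\<^sup>L lborel g" .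
  show ?thesis unfolding R Hdef b_def[symmetric] B_def[symmetric] using gI
    by (simp add: algebra_simps)
qed

end
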